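(* Let $h:\{0,1\}^*\to\{0,1\}^*$ be the morphism defined by $h(0)=0110100110110010110$ and $h(1)=1001011001001101001$. (a) If $h(ab)=t\,h(c)\,u$ for some letters $a,b,c\in\{0,1\}$ and words $t,u\in\{0,1\}^*$, then $t=\epsilon$ or $u=\epsilon$. (b) If there exist letters $a,b,c\in\{0,1\}$ and words $s,t,u,v\in\{0,1\}^*$ such that $h(a)=st$, $h(b)=uv$ and $h(c)=sv$, then $a=c$ or $b=c$.
   Context: $\epsilon$ denotes the empty word. *)

theory Defs
  imports Main
begin

text \<open>Binary alphabet {0,1} rendered as bool: False = 0, True = 1.
  Words are lists of letters; the empty word is [].\<close>

definition w01 :: "string \<Rightarrow> bool list" where
  "w01 s = map (\<lambda>c. c = CHR ''1'') s"

definition h_letter :: "bool \<Rightarrow> bool list" where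
  "h_letter a = (if a then w01 ''1001011001001101001'' else w01 ''0110100110110010110'')"

definition h :: "bool list \<Rightarrow> bool list" where
  "h w = concat (map h_letter w)"

end

theory Submission
  imports Defs
begin

lemma lenh: "length (h [x]) = 19"
  by (cases x) (simp_all add: h_def h_letter_def w01_def)

lemma brA: "\<forall>k\<in>set [0..<20]. take 19 (drop k (h [a,b])) = h [c] \<longrightarrow> k = 0 \<or> k = 19"
  by (cases a; cases b; cases c; simp add: h_def h_letter_def w01_def upt_rec)

lemma brB: "\<forall>k\<in>set [0..<20]. take k (h [a]) = take k (h [c]) \<and> drop k (h [b]) = drop k (h [c]) \<longrightarrow> a = c \<or> b = c"
  by (cases a; cases b; cases c; simp add: h_def h_letter_def w01_def upt_rec)

lemma partA: assumes "h [a, b] = t @ h [c] @ u" shows "t = [] \<or> u = []"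
proof -
  have hab: "h [a,b] = h [a] @ h [b]" by (simp add: h_def)
  have L: "length t + length u = 19" using assms lenh[of a] lenh[of b] lenh[of c] hab
    by (metis add_left_cancel add.commute length_append add.assoc)
  have "take 19 (drop (length t) (h [a,b])) = h [c]" using assms lenh[of c] by simp
  moreover have "length t \<in> set [0..<20]" using L by simp
  ultimately have "length t = 0 \<or> length t = 19" using brA by blast
  thus ?thesis using L by auto
qed

lemma partB: assumes "h [a] = s @ t" "h [b] = u @ v" "h [c] = s @ v" shows "a = c \<or> b = c"
proof -
  have L: "length s + length v = 19" using assms(3) lenh[of c] by (metis length_append)
  have "take (length s) (h [a]) = take (length s) (h [c])" using assms by simp
  moreover have "drop (length s) (h [b]) = drop (length s) (h [c])"
  proof -
    have "length u = length s" using assms(2) lenh[of b] L by (metis add_right_cancel length_append)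
    thus ?thesis using assms by simp
  qed
  moreover have "length s \<in> set [0..<20]" using L by simp
  ultimately show ?thesis using brB by blast
qed

theorem lemma12:
  shows "(\<forall>(a::bool) b c (t::bool list) u. h [a, b] = t @ h [c] @ u \<longrightarrow> t = [] \<or> u = [])
     \<and> (\<forall>(a::bool) b c (s::bool list) t u v.
           h [a] = s @ t \<and> h [b] = u @ v \<and> h [c] = s @ v \<longrightarrow> a = c \<or> b = c)"
  using partA partB by blast

end
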